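(* Let $n\geq 2$, $w=w_1\cdots w_n\in\mathfrak{S}_n$, $i\in\{1,\dots,n\}$ and $1\leq k\leq n-1$. Then $w_i$ is a $k$-peak of $w$ if and only if both of the following hold: (1) if there is $s>i$ with $w_s>w_i$, then there is $j$ with $i<j\leq s$ and $w_i-w_j\geq k$; (2) if there is $s<i$ with $w_s>w_i$, then there is $j$ with $s\leq j<i$ and $w_i-w_j\geq k$.
   Context: $\mathfrak{S}_n$ is the set of permutations $w=w_1\cdots w_n$ of $\{1,\dots,n\}$. A section of $w$ is a consecutive block $w_s\cdots w_t$ ($s\le t$). A section $w_s\cdots w_t$ is a $k$-up if $s<t$ and $w_t-w_s\geq k$, and a $k$-down if $s<t$ and $w_s-w_t\geq k$; a $k$-up/$k$-down "in" $w_a\cdots w_b$ means one $w_s\cdots w_t$ with $a\le s<t\le b$. A section $w_i\cdots w_j$ ($i<j$) is $k$-ascending if $w_i=\min\{w_i,\dots,w_j\}$, $w_j=\max\{w_i,\dots,w_j\}$, $w_j-w_i\geq k$, and there is no $k$-down in it; it is $k$-descending if $w_i=\max$, $w_j=\min$ of $\{w_i,\dots,w_j\}$, $w_i-w_j\geq k$, and there is no $k$-up in it. Such a section is maximal if not contained in another section of the same type. An entry $w_i$ is a $k$-peak of $w$ if it is the last entry of a maximal $k$-ascending section or the first entry of a maximal $k$-descending section. *)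

theory Defs
  imports Main
begin

(* Permutations of {1..n} in one-line notation: w :: nat => nat, entries w 1, ..., w n.
   Differences are taken in int. *)

definition is_perm :: "nat \<Rightarrow> (nat \<Rightarrow> nat) \<Rightarrow> bool" where
  "is_perm n w \<longleftrightarrow> bij_betw w {1..n} {1..n}"

definition has_kup_in :: "(nat \<Rightarrow> nat) \<Rightarrow> nat \<Rightarrow> nat \<Rightarrow> nat \<Rightarrow> bool" where
  "has_kup_in w k a b \<longleftrightarrow> (\<exists>s t. a \<le> s \<and> s < t \<and> t \<le> b \<and> int (w t) - int (w s) \<ge> int k)"

definition has_kdown_in :: "(nat \<Rightarrow> nat) \<Rightarrow> nat \<Rightarrow> nat \<Rightarrow> nat \<Rightarrow> bool" where
  "has_kdown_in w k a b \<longleftrightarrow> (\<exists>s t. a \<le> s \<and> s < t \<and> t \<le> b \<and> int (w s) - int (w t) \<ge> int k)"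

definition k_ascending :: "nat \<Rightarrow> (nat \<Rightarrow> nat) \<Rightarrow> nat \<Rightarrow> nat \<Rightarrow> nat \<Rightarrow> bool" where
  "k_ascending n w k i j \<longleftrightarrow> 1 \<le> i \<and> i < j \<and> j \<le> n \<and>
     w i = Min (w ` {i..j}) \<and> w j = Max (w ` {i..j}) \<and>
     int (w j) - int (w i) \<ge> int k \<and> \<not> has_kdown_in w k i j"

definition k_descending :: "nat \<Rightarrow> (nat \<Rightarrow> nat) \<Rightarrow> nat \<Rightarrow> nat \<Rightarrow> nat \<Rightarrow> bool" where
  "k_descending n w k i j \<longleftrightarrow> 1 \<le> i \<and> i < j \<and> j \<le> n \<and>
     w i = Max (w ` {i..j}) \<and> w j = Min (w ` {i..j}) \<and>
     int (w i) - int (w j) \<ge> int k \<and> \<not> has_kup_in w k i j"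

definition max_k_ascending :: "nat \<Rightarrow> (nat \<Rightarrow> nat) \<Rightarrow> nat \<Rightarrow> nat \<Rightarrow> nat \<Rightarrow> bool" where
  "max_k_ascending n w k i j \<longleftrightarrow> k_ascending n w k i j \<and>
     \<not> (\<exists>i' j'. k_ascending n w k i' j' \<and> i' \<le> i \<and> j \<le> j' \<and> (i', j') \<noteq> (i, j))"

definition max_k_descending :: "nat \<Rightarrow> (nat \<Rightarrow> nat) \<Rightarrow> nat \<Rightarrow> nat \<Rightarrow> nat \<Rightarrow> bool" where
  "max_k_descending n w k i j \<longleftrightarrow> k_descending n w k i j \<and>
     \<not> (\<exists>i' j'. k_descending n w k i' j' \<and> i' \<le> i \<and> j \<le> j' \<and> (i', j') \<noteq> (i, j))"

definition is_k_peak :: "nat \<Rightarrow> (nat \<Rightarrow> nat) \<Rightarrow> nat \<Rightarrow> nat \<Rightarrow> bool" where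
  "is_k_peak n w k i \<longleftrightarrow> (\<exists>s. max_k_ascending n w k s i) \<or> (\<exists>t. max_k_descending n w k i t)"

end

theory Submission
  imports Defs
begin

lemma Min_at: "p \<in> {i..j::nat} \<Longrightarrow> (w p = Min (w`{i..j})) \<longleftrightarrow> (\<forall>x\<in>{i..j}. (w::nat\<Rightarrow>nat) p \<le> w x)"
  apply (rule iffI)
   apply (metis Min_le finite_atLeastAtMost finite_imageI image_eqI)
  apply (rule sym, rule Min_eqI) apply auto
  done

lemma Max_at: "p \<in> {i..j::nat} \<Longrightarrow> (w p = Max (w`{i..j})) \<longleftrightarrow> (\<forall>x\<in>{i..j}. (w::nat\<Rightarrow>nat) x \<le> w p)"
  apply (rule iffI)
   apply (metis Max_ge finite_atLeastAtMost finite_imageI image_eqI)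
  apply (rule sym, rule Max_eqI) apply auto
  done

lemma asc_conds:
  assumes "max_k_ascending n w k a i"
  shows "(\<forall>s. i < s \<and> s \<le> n \<and> w s > w i \<longrightarrow>
        (\<exists>j. i < j \<and> j \<le> s \<and> int (w i) - int (w j) \<ge> int k)) \<and>
     (\<forall>s. 1 \<le> s \<and> s < i \<and> w s > w i \<longrightarrow>
        (\<exists>j. s \<le> j \<and> j < i \<and> int (w i) - int (w j) \<ge> int k))"
proof -
  have A: "k_ascending n w k a i" and M: "\<not>(\<exists>i' j'. k_ascending n w k i' j' \<and> i' \<le> a \<and> i \<le> j' \<and> (i',j') \<noteq> (a,i))"
    using assms unfolding max_k_ascending_def by auto
  have ai: "1 \<le> a" "a < i" "i \<le> n" and d: "int (w i) - int (w a) \<ge> int k"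
    and nd: "\<not> has_kdown_in w k a i" using A unfolding k_ascending_def by auto
  have minA: "\<forall>x\<in>{a..i}. w a \<le> w x" using A ai unfolding k_ascending_def by (subst (asm) Min_at) auto
  have maxA: "\<forall>x\<in>{a..i}. w x \<le> w i" using A ai unfolding k_ascending_def by (subst (asm) Max_at) auto
  show ?thesis
  proof (intro conjI allI impI)
    fix s assume s: "1 \<le> s \<and> s < i \<and> w s > w i"
    then have "s < a" using maxA by (metis atLeastAtMost_iff leD less_imp_le not_le)
    then show "\<exists>j. s \<le> j \<and> j < i \<and> int (w i) - int (w j) \<ge> int k" using ai d by (intro exI[of _ a]) auto
  next
    fix s assume s: "i < s \<and> s \<le> n \<and> w s > w i"
    show "\<exists>j. i < j \<and> j \<le> s \<and> int (w i) - int (w j) \<ge> int k"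
    proof (rule ccontr)
      assume "\<not> ?thesis"
      hence C: "\<forall>j. i < j \<and> j \<le> s \<longrightarrow> int (w i) - int (w j) < int k" by auto
      define s' where "s' = (LEAST x. i < x \<and> x \<le> s \<and> w x > w i)"
      have s'P: "i < s' \<and> s' \<le> s \<and> w s' > w i" unfolding s'_def by (rule LeastI[of _ s]) (use s in auto)
      have s'L: "w x \<le> w i" if "i < x" "x < s'" for x
      proof -
        have "\<not>(i < x \<and> x \<le> s \<and> w x > w i)" using that(2) unfolding s'_def by (rule not_less_Least)
        then show ?thesis using that s'P by auto
      qed
      have "k_ascending n w k a s'"
        unfolding k_ascending_def
      proof (intro conjI)
        show "w a = Min (w ` {a..s'})"
        proof (subst Min_at)
          show "a \<in> {a..s'}" using ai s'P by auto
          show "\<forall>x\<in>{a..s'}. w a \<le> w x"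
          proof
            fix x assume x: "x \<in> {a..s'}"
            show "w a \<le> w x"
            proof (cases "x \<le> i")
              case True then show ?thesis using minA x by auto
            next
              case False then show ?thesis using C[rule_format, of x] x s'P d by auto
            qed
          qed
        qed
        show "w s' = Max (w ` {a..s'})"
        proof (subst Max_at)
          show "s' \<in> {a..s'}" using ai s'P by auto
          show "\<forall>x\<in>{a..s'}. w x \<le> w s'"
          proof
            fix x assume x: "x \<in> {a..s'}"
            show "w x \<le> w s'"
            proof (cases "x \<le> i")
              case True then show ?thesis using maxA x s'P by force
            next
              case False then show ?thesis using s'L[of x] x s'P by (cases "x = s'") auto
            qed
          qed
        qed
        show "\<not> has_kdown_in w k a s'"
        proof
          assume "has_kdown_in w k a s'"
          then obtain s1 t1 where st: "a \<le> s1" "s1 < t1" "t1 \<le> s'" "int (w s1) - int (w t1) \<ge> int k"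
            unfolding has_kdown_in_def by auto
          show False
          proof (cases "t1 \<le> i")
            case True then show ?thesis using nd st unfolding has_kdown_in_def by auto
          next
            case False
            have "w s1 \<le> w i"
            proof (cases "s1 \<le> i")
              case True then show ?thesis using maxA st by auto
            next
              case False then show ?thesis using s'L[of s1] st by auto
            qed
            then show ?thesis using C[rule_format, of t1] False st s'P by auto
          qed
        qed
      qed (use ai s'P s d in auto)
      then have "k_ascending n w k a s' \<and> a \<le> a \<and> i \<le> s' \<and> (a, s') \<noteq> (a, i)" using s'P by auto
      then show False using M by blast
    qed
  qed
qed


lemma desc_conds:
  assumes "max_k_descending n w k i b"
  shows "(\<forall>s. i < s \<and> s \<le> n \<and> w s > w i \<longrightarrow>
        (\<exists>j. i < j \<and> j \<le> s \<and> int (w i) - int (w j) \<ge> int k)) \<and>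
     (\<forall>s. 1 \<le> s \<and> s < i \<and> w s > w i \<longrightarrow>
        (\<exists>j. s \<le> j \<and> j < i \<and> int (w i) - int (w j) \<ge> int k))"
proof -
  have A: "k_descending n w k i b" and M: "\<not>(\<exists>i' j'. k_descending n w k i' j' \<and> i' \<le> i \<and> b \<le> j' \<and> (i',j') \<noteq> (i,b))"
    using assms unfolding max_k_descending_def by auto
  have ai: "1 \<le> i" "i < b" "b \<le> n" and d: "int (w i) - int (w b) \<ge> int k"
    and nd: "\<not> has_kup_in w k i b" using A unfolding k_descending_def by auto
  have minA: "\<forall>x\<in>{i..b}. w b \<le> w x" using A ai unfolding k_descending_def by (subst (asm) Min_at) auto
  have maxA: "\<forall>x\<in>{i..b}. w x \<le> w i" using A ai unfolding k_descending_def by (subst (asm) Max_at) auto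
  show ?thesis
  proof (intro conjI allI impI)
    fix s assume s: "i < s \<and> s \<le> n \<and> w s > w i"
    then have "b < s" using maxA by (metis atLeastAtMost_iff leD less_imp_le not_le)
    then show "\<exists>j. i < j \<and> j \<le> s \<and> int (w i) - int (w j) \<ge> int k" using ai d by (intro exI[of _ b]) auto
  next
    fix s assume s: "1 \<le> s \<and> s < i \<and> w s > w i"
    show "\<exists>j. s \<le> j \<and> j < i \<and> int (w i) - int (w j) \<ge> int k"
    proof (rule ccontr)
      assume "\<not> ?thesis"
      hence C: "\<forall>j. s \<le> j \<and> j < i \<longrightarrow> int (w i) - int (w j) < int k" by auto
      define s' where "s' = (GREATEST x. s \<le> x \<and> x < i \<and> w x > w i)"
      have s'P: "s \<le> s' \<and> s' < i \<and> w s' > w i" unfolding s'_def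
        by (rule GreatestI_nat[of _ s i]) (use s in auto)
      have s'L: "w x \<le> w i" if "s' < x" "x < i" for x
      proof -
        have "\<not>(s \<le> x \<and> x < i \<and> w x > w i)"
        proof
          assume "s \<le> x \<and> x < i \<and> w x > w i"
          then have "x \<le> s'" unfolding s'_def by (intro Greatest_le_nat[of _ x i]) auto
          then show False using that by auto
        qed
        then show ?thesis using that s'P by auto
      qed
      have "k_descending n w k s' b"
        unfolding k_descending_def
      proof (intro conjI)
        show "w b = Min (w ` {s'..b})"
        proof (subst Min_at)
          show "b \<in> {s'..b}" using ai s'P by auto
          show "\<forall>x\<in>{s'..b}. w b \<le> w x"
          proof
            fix x assume x: "x \<in> {s'..b}"
            show "w b \<le> w x"
            proof (cases "i \<le> x")
              case True then show ?thesis using minA x by auto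
            next
              case False then show ?thesis using C[rule_format, of x] x s'P d by auto
            qed
          qed
        qed
        show "w s' = Max (w ` {s'..b})"
        proof (subst Max_at)
          show "s' \<in> {s'..b}" using ai s'P by auto
          show "\<forall>x\<in>{s'..b}. w x \<le> w s'"
          proof
            fix x assume x: "x \<in> {s'..b}"
            show "w x \<le> w s'"
            proof (cases "i \<le> x")
              case True then show ?thesis using maxA x s'P by force
            next
              case False then show ?thesis using s'L[of x] x s'P by (cases "x = s'") auto
            qed
          qed
        qed
        show "\<not> has_kup_in w k s' b"
        proof
          assume "has_kup_in w k s' b"
          then obtain s1 t1 where st: "s' \<le> s1" "s1 < t1" "t1 \<le> b" "int (w t1) - int (w s1) \<ge> int k"
            unfolding has_kup_in_def by auto
          show False
          proof (cases "i \<le> s1")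
            case True then show ?thesis using nd st unfolding has_kup_in_def by auto
          next
            case False
            have "w t1 \<le> w i"
            proof (cases "i \<le> t1")
              case True then show ?thesis using maxA st by auto
            next
              case False then show ?thesis using s'L[of t1] st by auto
            qed
            then show ?thesis using C[rule_format, of s1] False st s'P by auto
          qed
        qed
      qed (use ai s'P s d in auto)
      then have "k_descending n w k s' b \<and> s' \<le> i \<and> b \<le> b \<and> (s', b) \<noteq> (i, b)" using s'P by auto
      then show False using M by blast
    qed
  qed
qed


lemma asc_exists:
  assumes inj: "inj_on w {1..n}" and i: "1 \<le> i" "i \<le> n" and k: "1 \<le> k"
    and c1: "\<forall>s. i < s \<and> s \<le> n \<and> w s > w i \<longrightarrow>
        (\<exists>j. i < j \<and> j \<le> s \<and> int (w i) - int (w j) \<ge> int k)"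
    and c2: "\<forall>s. 1 \<le> s \<and> s < i \<and> w s > w i \<longrightarrow>
        (\<exists>j. s \<le> j \<and> j < i \<and> int (w i) - int (w j) \<ge> int k)"
    and x: "1 \<le> x" "x < i" "int (w i) - int (w x) \<ge> int k"
  shows "\<exists>a. max_k_ascending n w k a i"
proof -
  define P where "P y \<longleftrightarrow> 1 \<le> y \<and> y < i \<and> int (w i) - int (w y) \<ge> int k" for y
  define p where "p = (GREATEST y. P y)"
  have pP: "P p" unfolding p_def by (rule GreatestI_nat[of _ x i]) (use x in \<open>auto simp: P_def\<close>)
  have bnd: "\<forall>z. P z \<longrightarrow> z \<le> i" unfolding P_def by auto
  have pL: "\<not> P y" if "p < y" for y
  proof
    assume "P y"
    then have "y \<le> p" unfolding p_def using bnd by (blast intro: Greatest_le_nat)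
    then show False using that by simp
  qed
  have low: "int (w i) - int (w y) < int k" if "p < y" "y \<le> i" for y
  proof (cases "y = i")
    case True then show ?thesis using k by auto
  next
    case False then show ?thesis using pL[OF that(1)] pP that unfolding P_def by auto
  qed
  have up: "w y \<le> w i" if "p \<le> y" "y \<le> i" for y
  proof (rule ccontr)
    assume nt: "\<not> ?thesis"
    then have "w y > w i" by auto
    moreover have "y \<noteq> p" using pP nt unfolding P_def by auto
    moreover have "y \<noteq> i" using nt by auto
    ultimately have "1 \<le> y \<and> y < i \<and> w y > w i" using that pP unfolding P_def by auto
    then obtain j where "y \<le> j" "j < i" "int (w i) - int (w j) \<ge> int k"
      using c2 by blast
    then show False using pL[of j] that \<open>y \<noteq> p\<close> unfolding P_def by auto
  qed
  have "k_ascending n w k p i"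
    unfolding k_ascending_def
  proof (intro conjI)
    show "w p = Min (w ` {p..i})"
    proof (subst Min_at)
      show "p \<in> {p..i}" using pP unfolding P_def by auto
      show "\<forall>y\<in>{p..i}. w p \<le> w y"
      proof
        fix y assume y: "y \<in> {p..i}"
        show "w p \<le> w y" using low[of y] y pP unfolding P_def by (cases "y = p") auto
      qed
    qed
    show "w i = Max (w ` {p..i})"
      by (subst Max_at) (use up pP in \<open>auto simp: P_def\<close>)
    show "\<not> has_kdown_in w k p i"
      unfolding has_kdown_in_def
    proof (intro notI, elim exE conjE)
      fix s t assume st: "p \<le> s" "s < t" "t \<le> i" "int k \<le> int (w s) - int (w t)"
      have "int (w i) - int (w t) < int k" using low[of t] st by auto
      moreover have "w s \<le> w i" using up[of s] st by auto
      ultimately show False using st by linarith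
    qed
  qed (use pP i in \<open>auto simp: P_def\<close>)
  define a0 where "a0 = (LEAST a. k_ascending n w k a i)"
  have a0P: "k_ascending n w k a0 i" unfolding a0_def by (rule LeastI) fact
  have "max_k_ascending n w k a0 i"
    unfolding max_k_ascending_def
  proof (intro conjI notI)
    show "k_ascending n w k a0 i" by fact
    assume "\<exists>i' j'. k_ascending n w k i' j' \<and> i' \<le> a0 \<and> i \<le> j' \<and> (i', j') \<noteq> (a0, i)"
    then obtain a' b' where ab: "k_ascending n w k a' b'" "a' \<le> a0" "i \<le> b'" "(a', b') \<noteq> (a0, i)" by blast
    show False
    proof (cases "b' = i")
      case True
      then have "a0 \<le> a'" unfolding a0_def using ab by (intro Least_le) simp
      then show False using ab True by auto
    next
      case False
      have bd: "1 \<le> a'" "a' < b'" "b' \<le> n" "w b' = Max (w ` {a'..b'})" "\<not> has_kdown_in w k a' b'"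
        using ab(1) unfolding k_ascending_def by auto
      have "a0 < i" using a0P unfolding k_ascending_def by auto
      have "i \<in> {a'..b'}" using ab(2,3) \<open>a0 < i\<close> by simp
      moreover have "\<forall>x\<in>{a'..b'}. w x \<le> w b'" using bd(4) Max_at[of b' a' b' w] bd(2) by simp
      ultimately have "w i \<le> w b'" by blast
      moreover have "w i \<noteq> w b'"
      proof
        assume "w i = w b'"
        then have "i = b'" using inj_onD[OF inj, of i b'] i bd(3) ab(3) by simp
        then show False using False by simp
      qed
      ultimately have "w b' > w i" by auto
      then have "i < b' \<and> b' \<le> n \<and> w b' > w i" using ab(3) False bd by auto
      then obtain j where "i < j" "j \<le> b'" "int (w i) - int (w j) \<ge> int k"
        using c1 by blast
      moreover have "a' \<le> i" using ab(2) \<open>a0 < i\<close> by simp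
      ultimately have "has_kdown_in w k a' b'" unfolding has_kdown_in_def by blast
      then show False using bd(5) by simp
    qed
  qed
  then show ?thesis by blast
qed


lemma desc_exists:
  assumes inj: "inj_on w {1..n}" and i: "1 \<le> i" "i \<le> n" and k: "1 \<le> k"
    and c1: "\<forall>s. i < s \<and> s \<le> n \<and> w s > w i \<longrightarrow>
        (\<exists>j. i < j \<and> j \<le> s \<and> int (w i) - int (w j) \<ge> int k)"
    and c2: "\<forall>s. 1 \<le> s \<and> s < i \<and> w s > w i \<longrightarrow>
        (\<exists>j. s \<le> j \<and> j < i \<and> int (w i) - int (w j) \<ge> int k)"
    and x: "i < x" "x \<le> n" "int (w i) - int (w x) \<ge> int k"
  shows "\<exists>b. max_k_descending n w k i b"
proof -
  define P where "P y \<longleftrightarrow> i < y \<and> y \<le> n \<and> int (w i) - int (w y) \<ge> int k" for y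
  define q where "q = (LEAST y. P y)"
  have qP: "P q" unfolding q_def by (rule LeastI[of _ x]) (use x in \<open>simp add: P_def\<close>)
  have qL: "\<not> P y" if "y < q" for y
    using that unfolding q_def by (rule not_less_Least)
  have low: "int (w i) - int (w y) < int k" if "i \<le> y" "y < q" for y
  proof (cases "y = i")
    case True then show ?thesis using k by auto
  next
    case False then show ?thesis using qL[OF that(2)] qP that unfolding P_def by auto
  qed
  have up: "w y \<le> w i" if "i \<le> y" "y \<le> q" for y
  proof (rule ccontr)
    assume nt: "\<not> ?thesis"
    then have "w y > w i" by auto
    moreover have "y \<noteq> q" using qP nt unfolding P_def by auto
    moreover have "y \<noteq> i" using nt by auto
    ultimately have "i < y \<and> y \<le> n \<and> w y > w i" using that qP unfolding P_def by auto
    then obtain j where "i < j" "j \<le> y" "int (w i) - int (w j) \<ge> int k"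
      using c1 by blast
    then show False using qL[of j] that \<open>y \<noteq> q\<close> qP unfolding P_def by auto
  qed
  have "k_descending n w k i q"
    unfolding k_descending_def
  proof (intro conjI)
    show "w q = Min (w ` {i..q})"
    proof (subst Min_at)
      show "q \<in> {i..q}" using qP unfolding P_def by auto
      show "\<forall>y\<in>{i..q}. w q \<le> w y"
      proof
        fix y assume y: "y \<in> {i..q}"
        show "w q \<le> w y" using low[of y] y qP unfolding P_def by (cases "y = q") auto
      qed
    qed
    show "w i = Max (w ` {i..q})"
    proof (subst Max_at)
      show "i \<in> {i..q}" using qP unfolding P_def by auto
      show "\<forall>y\<in>{i..q}. w y \<le> w i" using up by auto
    qed
    show "\<not> has_kup_in w k i q"
      unfolding has_kup_in_def
    proof (intro notI, elim exE conjE)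
      fix s t assume st: "i \<le> s" "s < t" "t \<le> q" "int k \<le> int (w t) - int (w s)"
      have "int (w i) - int (w s) < int k" using low[of s] st by auto
      moreover have "w t \<le> w i" using up[of t] st by auto
      ultimately show False using st by linarith
    qed
  qed (use qP i in \<open>simp_all add: P_def\<close>)
  define b0 where "b0 = (GREATEST b. k_descending n w k i b)"
  have bnd: "\<forall>b. k_descending n w k i b \<longrightarrow> b \<le> n" unfolding k_descending_def by auto
  have b0P: "k_descending n w k i b0" unfolding b0_def
    using \<open>k_descending n w k i q\<close> bnd by (blast intro: GreatestI_nat)
  have "max_k_descending n w k i b0"
    unfolding max_k_descending_def
  proof (intro conjI notI)
    show "k_descending n w k i b0" by fact
    assume "\<exists>i' j'. k_descending n w k i' j' \<and> i' \<le> i \<and> b0 \<le> j' \<and> (i', j') \<noteq> (i, b0)"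
    then obtain a' b' where ab: "k_descending n w k a' b'" "a' \<le> i" "b0 \<le> b'" "(a', b') \<noteq> (i, b0)" by blast
    show False
    proof (cases "a' = i")
      case True
      then have "b' \<le> b0" unfolding b0_def using ab bnd by (blast intro: Greatest_le_nat)
      then show False using ab True by auto
    next
      case False
      have bd: "1 \<le> a'" "a' < b'" "b' \<le> n" "w a' = Max (w ` {a'..b'})" "\<not> has_kup_in w k a' b'"
        using ab(1) unfolding k_descending_def by auto
      have "i < b0" using b0P unfolding k_descending_def by auto
      have "i \<in> {a'..b'}" using ab(2,3) \<open>i < b0\<close> by simp
      moreover have "\<forall>x\<in>{a'..b'}. w x \<le> w a'" using bd(4) Max_at[of a' a' b' w] bd(2) by simp
      ultimately have "w i \<le> w a'" by blast
      moreover have "w i \<noteq> w a'"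
      proof
        assume "w i = w a'"
        then have "i = a'" using inj_onD[OF inj, of i a'] i bd(1) ab(2) by simp
        then show False using False by simp
      qed
      ultimately have "w a' > w i" by auto
      then have "1 \<le> a' \<and> a' < i \<and> w a' > w i" using ab(2) False bd by auto
      then obtain j where "a' \<le> j" "j < i" "int (w i) - int (w j) \<ge> int k"
        using c2 by blast
      moreover have "i \<le> b'" using ab(3) \<open>i < b0\<close> by simp
      ultimately have "has_kup_in w k a' b'" unfolding has_kup_in_def by force
      then show False using bd(5) by simp
    qed
  qed
  then show ?thesis by blast
qed

theorem proposition3p1:
  fixes n k i :: nat and w :: "nat \<Rightarrow> nat"
  assumes "n \<ge> 2" and "is_perm n w" and "1 \<le> i" and "i \<le> n"
    and "1 \<le> k" and "k \<le> n - 1"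
  shows "is_k_peak n w k i \<longleftrightarrow>
    ((\<forall>s. i < s \<and> s \<le> n \<and> w s > w i \<longrightarrow>
        (\<exists>j. i < j \<and> j \<le> s \<and> int (w i) - int (w j) \<ge> int k)) \<and>
     (\<forall>s. 1 \<le> s \<and> s < i \<and> w s > w i \<longrightarrow>
        (\<exists>j. s \<le> j \<and> j < i \<and> int (w i) - int (w j) \<ge> int k)))"
proof
  assume "is_k_peak n w k i"
  then show "(\<forall>s. i < s \<and> s \<le> n \<and> w s > w i \<longrightarrow>
        (\<exists>j. i < j \<and> j \<le> s \<and> int (w i) - int (w j) \<ge> int k)) \<and>
     (\<forall>s. 1 \<le> s \<and> s < i \<and> w s > w i \<longrightarrow>
        (\<exists>j. s \<le> j \<and> j < i \<and> int (w i) - int (w j) \<ge> int k))"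
    unfolding is_k_peak_def using asc_conds desc_conds by blast
next
  assume R: "(\<forall>s. i < s \<and> s \<le> n \<and> w s > w i \<longrightarrow>
        (\<exists>j. i < j \<and> j \<le> s \<and> int (w i) - int (w j) \<ge> int k)) \<and>
     (\<forall>s. 1 \<le> s \<and> s < i \<and> w s > w i \<longrightarrow>
        (\<exists>j. s \<le> j \<and> j < i \<and> int (w i) - int (w j) \<ge> int k))"
  have c1: "\<forall>s. i < s \<and> s \<le> n \<and> w s > w i \<longrightarrow>
        (\<exists>j. i < j \<and> j \<le> s \<and> int (w i) - int (w j) \<ge> int k)" using R by blast
  have c2: "\<forall>s. 1 \<le> s \<and> s < i \<and> w s > w i \<longrightarrow>
        (\<exists>j. s \<le> j \<and> j < i \<and> int (w i) - int (w j) \<ge> int k)" using R by blast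
  have inj: "inj_on w {1..n}" using assms(2) unfolding is_perm_def by (rule bij_betw_imp_inj_on)
  have "\<exists>x\<in>{1..n}. x \<noteq> i \<and> int (w i) - int (w x) \<ge> int k"
  proof (rule ccontr)
    assume "\<not> ?thesis"
    then have N: "\<forall>x\<in>{1..n}. x \<noteq> i \<longrightarrow> int (w i) - int (w x) < int k" by auto
    have le: "w x \<le> w i" if xin: "x \<in> {1..n}" for x
    proof (rule ccontr)
      assume "\<not> w x \<le> w i"
      then have gt: "w x > w i" by simp
      show False
      proof (cases "x < i")
        case True
        then obtain j where "x \<le> j" "j < i" "int (w i) - int (w j) \<ge> int k"
          using c2 gt xin True by (meson atLeastAtMost_iff)
        then show False using N[rule_format, of j] xin assms(4) by auto
      next
        case False
        then have "i < x" using gt by (cases "x = i") auto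
        then obtain j where "i < j" "j \<le> x" "int (w i) - int (w j) \<ge> int k"
          using c1 gt xin \<open>i < x\<close> by (meson atLeastAtMost_iff)
        then show False using N[rule_format, of j] xin assms(3) by auto
      qed
    qed
    have "w ` {1..n} \<subseteq> {w i + 1 - k .. w i}"
    proof
      fix y assume "y \<in> w ` {1..n}"
      then obtain x where x: "x \<in> {1..n}" "y = w x" by auto
      have "w x \<le> w i" using le x by auto
      moreover have "w i + 1 - k \<le> w x"
      proof (cases "x = i")
        case True then show ?thesis using assms(5) by simp
      next
        case False then show ?thesis using N x by fastforce
      qed
      ultimately show "y \<in> {w i + 1 - k .. w i}" using x by simp
    qed
    then have "card (w ` {1..n}) \<le> card {w i + 1 - k .. w i}" by (intro card_mono) auto
    moreover have "card (w ` {1..n}) = n" using card_image[OF inj] by simp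
    moreover have "card {w i + 1 - k .. w i} \<le> k" by simp
    ultimately show False using assms by linarith
  qed
  then obtain x where x: "x \<in> {1..n}" "x \<noteq> i" "int (w i) - int (w x) \<ge> int k" by blast
  show "is_k_peak n w k i"
  proof (cases "x < i")
    case True
    then show ?thesis unfolding is_k_peak_def
      using asc_exists[OF inj assms(3,4,5) c1 c2, of x] x by auto
  next
    case False
    then have "i < x" using x by simp
    then show ?thesis unfolding is_k_peak_def
      using desc_exists[OF inj assms(3,4,5) c1 c2, of x] x by auto
  qed
qed

end
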